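(* Let $\mathbb V$ be a Schubert representation of $\widehat H_n$ with generic Schubert classes $\{\mathcal Y_w\}_{w\in S_n}$, evaluation map $\operatorname{ev}$ and equivariant parameters $t_1,\dots,t_n$. Let $w\in S_n$ and $f\in\mathcal A_\hbar[x_1,\dots,x_n]$, and suppose that in $\widehat H_n$ $$\overline T_wf=\sum_{u\in S_n}P_{u,w}(x_1,\dots,x_n)\,\overline T_u,\qquad P_{u,w}\in\mathcal A_\hbar[x_1,\dots,x_n].$$ Then for each $u\in S_n$, $f\cdot\mathcal Y_u=\sum_{w\in S_n}P_{u,w}(t_1,\dots,t_n)\,\mathcal Y_w$ in $\mathbb V$.
   Context: $\mathcal A=\mathbb Q[p,q]$, $\mathcal A_\hbar=\mathcal A[\hbar]$. The affine Hecke algebra $\widehat H_n$ over $\mathcal A_\hbar$ is generated by $T_1,\dots,T_{n-1}$ and $x_1,\dots,x_n$ subject to: $(T_i+p)(T_i-q)=0$; $T_iT_j=T_jT_i$ for $|i-j|>1$; $T_iT_{i+1}T_i=T_{i+1}T_iT_{i+1}$; $x_ix_j=x_jx_i$; $T_ix_j=x_jT_i$ for $j\ne i,i+1$; $T_ix_i=x_{i+1}T_i+(\hbar-(p-q)x_i)$; $T_ix_{i+1}=x_iT_i-(\hbar-(p-q)x_i)$. For $w\in S_n$ with reduced word $w=s_{i_1}\cdots s_{i_\ell}$, $T_w=T_{i_1}\cdots T_{i_\ell}$; $\overline T_i=T_i+p-q$ and $\overline T_w=\overline T_{i_1}\cdots\overline T_{i_\ell}$ (well defined). The elements $x^\alpha\overline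 T_w$ form an $\mathcal A_\hbar$-basis of $\widehat H_n$. A Schubert representation: a field $\mathbb F$ with elements $t_1,\dots,t_n\in\mathbb F$ (equivariant parameters), a ring map $\mathcal A_\hbar\to\mathbb F$ (images still written $p,q,\hbar$), and an $\mathbb F$-vector space $\mathbb V$ with an action of $\widehat H_n$ in which $\mathcal A_\hbar$ acts by these scalars, together with a distinguished $\mathcal Y_{w_0}\in\mathbb V$ ($w_0$ the longest element of $S_n$) such that $\mathcal Y_w:=T_{w^{-1}w_0}\cdot\mathcal Y_{w_0}$ ($w\in S_n$) form an $\mathbb F$-basis of $\mathbb V$, and an $\mathbb F$-linear map $\operatorname{ev}\colon\mathbb V\to\mathbb F$ with $\operatorname{ev}(\mathcal Y_w)\ne0\iff w=\mathrm{id}$ and $\operatorname{ev}(x_i\cdot\mathcal Y_w)=t_i\operatorname{ev}(\mathcal Y_w)$ for all $i,w$. $P(t_1,\dots,t_n)$ denotes the image of $P$ in $\mathbb F$ under $x_i\mapsto t_i$. *)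

theory Defs
  imports Complex_Main "HOL-Library.Poly_Mapping" "HOL-Combinatorics.Permutations"
begin

datatype avar = Vp | Vq | Vh

text \<open>Multivariate polynomials over Q in the three variables p, q, hbar.\<close>
type_synonym Ah = "(avar \<Rightarrow>\<^sub>0 nat) \<Rightarrow>\<^sub>0 rat"

definition pA :: Ah where "pA = Poly_Mapping.single (Poly_Mapping.single Vp 1) 1"
definition qA :: Ah where "qA = Poly_Mapping.single (Poly_Mapping.single Vq 1) 1"
definition hA :: Ah where "hA = Poly_Mapping.single (Poly_Mapping.single Vh 1) 1"

text \<open>Polynomials in x_1..x_n with coefficients in A_hbar: finitely supported maps
  from exponent vectors to coefficients; exponent vectors may only involve 1..n.\<close>
type_synonym Apoly = "(nat \<Rightarrow>\<^sub>0 nat) \<Rightarrow>\<^sub>0 Ah"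

definition is_xpoly :: "nat \<Rightarrow> Apoly \<Rightarrow> bool" where
  "is_xpoly n f \<longleftrightarrow> (\<forall>\<alpha>\<in>Poly_Mapping.keys f. Poly_Mapping.keys \<alpha> \<subseteq> {1..n})"

definition ring_hom_on :: "('a::comm_ring_1 \<Rightarrow> 'b::ring_1) \<Rightarrow> bool" where
  "ring_hom_on \<phi> \<longleftrightarrow> \<phi> 1 = 1 \<and> (\<forall>a b. \<phi> (a + b) = \<phi> a + \<phi> b) \<and> (\<forall>a b. \<phi> (a * b) = \<phi> a * \<phi> b)"

definition Sn :: "nat \<Rightarrow> (nat \<Rightarrow> nat) set" where
  "Sn n = {w. w permutes {1..n}}"

definition sgen :: "nat \<Rightarrow> nat \<Rightarrow> nat" where
  "sgen i = (\<lambda>j. if j = i then i + 1 else if j = i + 1 then i else j)"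

text \<open>Permutations compose as functions: the word [i1,...,il] denotes s_i1 o ... o s_il.\<close>
definition word_perm :: "nat list \<Rightarrow> nat \<Rightarrow> nat" where
  "word_perm ws = foldr (\<lambda>i w. sgen i \<circ> w) ws id"

definition reduced_word :: "nat \<Rightarrow> (nat \<Rightarrow> nat) \<Rightarrow> nat list \<Rightarrow> bool" where
  "reduced_word n w ws \<longleftrightarrow> set ws \<subseteq> {1..<n} \<and> word_perm ws = w \<and>
     (\<forall>vs. set vs \<subseteq> {1..<n} \<and> word_perm vs = w \<longrightarrow> length ws \<le> length vs)"

definition Tw :: "nat \<Rightarrow> (nat \<Rightarrow> 'h::ring_1) \<Rightarrow> (nat \<Rightarrow> nat) \<Rightarrow> 'h" where
  "Tw n T w = prod_list (map T (SOME ws. reduced_word n w ws))"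

definition Tbar :: "nat \<Rightarrow> (Ah \<Rightarrow> 'h::ring_1) \<Rightarrow> (nat \<Rightarrow> 'h) \<Rightarrow> (nat \<Rightarrow> nat) \<Rightarrow> 'h" where
  "Tbar n sc T w = Tw n (\<lambda>i. T i + sc pA - sc qA) w"

definition w0 :: "nat \<Rightarrow> nat \<Rightarrow> nat" where
  "w0 n = (\<lambda>i. if i \<in> {1..n} then n + 1 - i else i)"

definition xmon :: "(nat \<Rightarrow> 'h::comm_monoid_mult) \<Rightarrow> (nat \<Rightarrow>\<^sub>0 nat) \<Rightarrow> 'h" where
  "xmon x \<alpha> = (\<Prod>i\<in>Poly_Mapping.keys \<alpha>. x i ^ Poly_Mapping.lookup \<alpha> i)"

definition xmonH :: "(nat \<Rightarrow> 'h::ring_1) \<Rightarrow> (nat \<Rightarrow>\<^sub>0 nat) \<Rightarrow> 'h" where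
  "xmonH x \<alpha> = prod_list (map (\<lambda>i. x i ^ Poly_Mapping.lookup \<alpha> i) (sorted_list_of_set (Poly_Mapping.keys \<alpha>)))"

definition emb :: "(Ah \<Rightarrow> 'h::ring_1) \<Rightarrow> (nat \<Rightarrow> 'h) \<Rightarrow> Apoly \<Rightarrow> 'h" where
  "emb sc x f = (\<Sum>\<alpha>\<in>Poly_Mapping.keys f. sc (Poly_Mapping.lookup f \<alpha>) * xmonH x \<alpha>)"

definition evalP :: "(Ah \<Rightarrow> 'f::field) \<Rightarrow> (nat \<Rightarrow> 'f) \<Rightarrow> Apoly \<Rightarrow> 'f" where
  "evalP \<phi> t f = (\<Sum>\<alpha>\<in>Poly_Mapping.keys f. \<phi> (Poly_Mapping.lookup f \<alpha>) * xmon t \<alpha>)"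

definition affine_hecke ::
  "nat \<Rightarrow> (Ah \<Rightarrow> 'h::ring_1) \<Rightarrow> (nat \<Rightarrow> 'h) \<Rightarrow> (nat \<Rightarrow> 'h) \<Rightarrow> bool" where
  "affine_hecke n sc T x \<longleftrightarrow>
     ring_hom_on sc \<and> (\<forall>a h. sc a * h = h * sc a) \<and>
     (\<forall>i\<in>{1..<n}. (T i + sc pA) * (T i - sc qA) = 0) \<and>
     (\<forall>i\<in>{1..<n}. \<forall>j\<in>{1..<n}. (i + 1 < j \<or> j + 1 < i) \<longrightarrow> T i * T j = T j * T i) \<and>
     (\<forall>i. 1 \<le> i \<and> i + 1 < n \<longrightarrow> T i * T (i+1) * T i = T (i+1) * T i * T (i+1)) \<and>
     (\<forall>i\<in>{1..n}. \<forall>j\<in>{1..n}. x i * x j = x j * x i) \<and>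
     (\<forall>i\<in>{1..<n}. \<forall>j\<in>{1..n}. j \<noteq> i \<and> j \<noteq> i + 1 \<longrightarrow> T i * x j = x j * T i) \<and>
     (\<forall>i\<in>{1..<n}. T i * x i = x (i+1) * T i + (sc hA - (sc pA - sc qA) * x i)) \<and>
     (\<forall>i\<in>{1..<n}. T i * x (i+1) = x i * T i - (sc hA - (sc pA - sc qA) * x i)) \<and>
     (\<forall>h. \<exists>!c :: ((nat \<Rightarrow>\<^sub>0 nat) \<times> (nat \<Rightarrow> nat)) \<Rightarrow> Ah.
        finite {k. c k \<noteq> 0} \<and>
        (\<forall>k. c k \<noteq> 0 \<longrightarrow> Poly_Mapping.keys (fst k) \<subseteq> {1..n} \<and> snd k \<in> Sn n) \<and>
        h = (\<Sum>k\<in>{k. c k \<noteq> 0}. sc (c k) * (xmonH x (fst k) * Tbar n sc T (snd k))))"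

definition schubert_rep ::
  "nat \<Rightarrow> (Ah \<Rightarrow> 'h::ring_1) \<Rightarrow> (nat \<Rightarrow> 'h) \<Rightarrow> (nat \<Rightarrow> 'h) \<Rightarrow>
   (Ah \<Rightarrow> 'f::field) \<Rightarrow> (nat \<Rightarrow> 'f) \<Rightarrow> ('f \<Rightarrow> 'v::ab_group_add \<Rightarrow> 'v) \<Rightarrow>
   ('h \<Rightarrow> 'v \<Rightarrow> 'v) \<Rightarrow> ((nat \<Rightarrow> nat) \<Rightarrow> 'v) \<Rightarrow> ('v \<Rightarrow> 'f) \<Rightarrow> bool" where
  "schubert_rep n sc T x \<phi> t scale act Y ev \<longleftrightarrow>
     ring_hom_on \<phi> \<and>
     vector_space scale \<and>
     (\<forall>h1 h2 v. act (h1 + h2) v = act h1 v + act h2 v) \<and>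
     (\<forall>h v1 v2. act h (v1 + v2) = act h v1 + act h v2) \<and>
     (\<forall>h c v. act h (scale c v) = scale c (act h v)) \<and>
     (\<forall>h1 h2 v. act (h1 * h2) v = act h1 (act h2 v)) \<and>
     (\<forall>v. act 1 v = v) \<and>
     (\<forall>a v. act (sc a) v = scale (\<phi> a) v) \<and>
     (\<forall>w\<in>Sn n. Y w = act (Tw n T (inv w \<circ> w0 n)) (Y (w0 n))) \<and>
     inj_on Y (Sn n) \<and>
     module.independent scale (Y ` Sn n) \<and>
     module.span scale (Y ` Sn n) = UNIV \<and>
     Vector_Spaces.linear scale (*) ev \<and>
     (\<forall>w\<in>Sn n. ev (Y w) \<noteq> 0 \<longleftrightarrow> w = id) \<and>
     (\<forall>i\<in>{1..n}. \<forall>w\<in>Sn n. ev (act (x i) (Y w)) = t i * ev (Y w))"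

end

theory Submission
  imports Defs
begin


definition invs :: "nat \<Rightarrow> (nat\<Rightarrow>nat) \<Rightarrow> (nat\<times>nat) set" where
  "invs n w = {(a,b). a \<in> {1..n} \<and> b \<in> {1..n} \<and> a < b \<and> w b < w a}"
definition len :: "nat \<Rightarrow> (nat\<Rightarrow>nat) \<Rightarrow> nat" where "len n w = card (invs n w)"

lemma finite_invs[simp]: "finite (invs n w)"
  by (rule finite_subset[of _ "{1..n}\<times>{1..n}"]) (auto simp: invs_def)

lemma sgen_transpose: "sgen i = Transposition.transpose i (Suc i)"
  by (auto simp: sgen_def Transposition.transpose_def fun_eq_iff)

lemma sgen_permutes: "i \<in> {1..<n} \<Longrightarrow> sgen i permutes {1..n}"
  unfolding sgen_transpose by (rule permutes_swap_id) auto

lemma sgen_sgen[simp]: "sgen i (sgen i j) = j"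
  by (auto simp: sgen_def)

lemma sgen_o_sgen[simp]: "sgen i \<circ> sgen i = id"
  by (auto simp: fun_eq_iff)

lemma inv_sgen[simp]: "inv (sgen i) = sgen i"
  by (metis inv_unique_comp sgen_o_sgen)

lemma len_right:
  assumes w: "w permutes {1..n}" and i: "i \<in> {1..<n}"
  shows "(w i < w (Suc i) \<longrightarrow> len n (w \<circ> sgen i) = Suc (len n w)) \<and>
         (w (Suc i) < w i \<longrightarrow> len n w = Suc (len n (w \<circ> sgen i)))"
proof -
  let ?s = "sgen i"
  let ?E = "{(i, Suc i)}"
  let ?f = "\<lambda>(a,b). (?s a, ?s b)"
  have mono: "?s a < ?s b" if "a < b" "(a,b) \<noteq> (i, Suc i)" for a b
    using that by (auto simp: sgen_def)
  have sin: "?s a \<in> {1..n}" if "a \<in> {1..n}" for a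
    using that i by (auto simp: sgen_def)
  have gen1: "(?s a, ?s b) \<in> invs n (v \<circ> ?s) - ?E" if ab: "(a,b) \<in> invs n v - ?E" for v a b
  proof -
    from ab have "a < b" "a \<in> {1..n}" "b \<in> {1..n}" "v b < v a" "(a,b) \<noteq> (i, Suc i)" by (auto simp: invs_def)
    moreover have "(?s a, ?s b) \<noteq> (i, Suc i)"
    proof
      assume "(?s a, ?s b) = (i, Suc i)"
      then have "?s a = i" "?s b = Suc i" by auto
      then have "a = ?s i" "b = ?s (Suc i)" by (metis sgen_sgen)+
      then have "a = Suc i" "b = i" by (auto simp: sgen_def)
      then show False using \<open>a < b\<close> by simp
    qed
    ultimately show ?thesis using mono[of a b] sin by (auto simp: invs_def)
  qed
  have gen: "?f ` (invs n v - ?E) \<subseteq> invs n (v \<circ> ?s) - ?E" for v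
    using gen1[of _ _ v] by auto
  have map1: "?f ` (invs n w - ?E) \<subseteq> invs n (w \<circ> ?s) - ?E" by (rule gen)
  have map2: "?f ` (invs n (w \<circ> ?s) - ?E) \<subseteq> invs n w - ?E"
    using gen[of "w \<circ> ?s"] by (simp add: comp_assoc)
  have bij: "bij_betw ?f (invs n w - ?E) (invs n (w \<circ> ?s) - ?E)"
    apply (rule bij_betw_byWitness[where f'="?f"])
    using map1 map2 by auto
  have ceq: "card (invs n w - ?E) = card (invs n (w \<circ> ?s) - ?E)"
    using bij_betw_same_card[OF bij] .
  have ne: "w i \<noteq> w (Suc i)" using permutes_inj[OF w] unfolding inj_def by (metis n_not_Suc_n)
  have E1: "(i, Suc i) \<in> invs n w \<longleftrightarrow> w (Suc i) < w i" using i by (auto simp: invs_def)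
  have E2: "(i, Suc i) \<in> invs n (w \<circ> ?s) \<longleftrightarrow> w i < w (Suc i)" using i by (auto simp: invs_def sgen_def)
  have c1: "card (invs n w) = card (invs n w - ?E) + (if w (Suc i) < w i then 1 else 0)"
    using E1 card_Diff_singleton_if[of "invs n w" "(i,Suc i)"] card_gt_0_iff[of "invs n w"] by auto
  have c2: "card (invs n (w \<circ> ?s)) = card (invs n (w \<circ> ?s) - ?E) + (if w i < w (Suc i) then 1 else 0)"
    using E2 card_Diff_singleton_if[of "invs n (w \<circ> ?s)" "(i,Suc i)"] card_gt_0_iff[of "invs n (w \<circ> ?s)"] by auto
  show ?thesis using c1 c2 ceq ne unfolding len_def by auto
qed

lemma len_inv:
  assumes w: "w permutes {1..n}"
  shows "len n (inv w) = len n w"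
proof -
  let ?f = "\<lambda>(a,b). (w b, w a)"
  let ?g = "\<lambda>(c,d). (inv w d, inv w c)"
  have wi: "w x \<in> {1..n} \<longleftrightarrow> x \<in> {1..n}" for x by (rule permutes_in_image[OF w])
  have iwi: "inv w x \<in> {1..n} \<longleftrightarrow> x \<in> {1..n}" for x by (rule permutes_in_image[OF permutes_inv[OF w]])
  have inj: "w a \<noteq> w b" if "a \<noteq> b" for a b using permutes_inj[OF w] that unfolding inj_def by blast
  have "bij_betw ?f (invs n w) (invs n (inv w))"
  proof (rule bij_betw_byWitness[where f'="?g"])
    show "\<forall>a\<in>invs n w. ?g (?f a) = a" by (auto simp: permutes_inverses[OF w])
    show "\<forall>a\<in>invs n (inv w). ?f (?g a) = a" by (auto simp: permutes_inverses[OF w])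
    show "?f ` invs n w \<subseteq> invs n (inv w)"
    proof
      fix p assume "p \<in> ?f ` invs n w"
      then obtain a b where ab: "(a,b) \<in> invs n w" "p = (w b, w a)" by auto
      then have h: "a \<in> {1..n}" "b \<in> {1..n}" "a<b" "w b < w a" by (auto simp: invs_def)
      then have "w a \<in> {1..n}" "w b \<in> {1..n}" using wi by blast+
      then show "p \<in> invs n (inv w)" using h ab(2) unfolding invs_def by (auto simp: permutes_inverses[OF w])
    qed
    show "?g ` invs n (inv w) \<subseteq> invs n w"
    proof
      fix p assume "p \<in> ?g ` invs n (inv w)"
      then obtain a b where ab: "(a,b) \<in> invs n (inv w)" "p = (inv w b, inv w a)" by auto
      then have h: "a \<in> {1..n}" "b \<in> {1..n}" "a<b" "inv w b < inv w a" by (auto simp: invs_def)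
      then have "inv w a \<in> {1..n}" "inv w b \<in> {1..n}" using iwi by blast+
      then show "p \<in> invs n w" using h ab(2) unfolding invs_def by (auto simp: permutes_inverses[OF w])
    qed
  qed
  then show ?thesis unfolding len_def by (simp add: bij_betw_same_card)
qed

lemma inv_comp_perm:
  assumes "w permutes S" "v permutes S"
  shows "inv (v \<circ> w) = inv w \<circ> inv v"
  using assms by (simp add: o_inv_distrib permutes_bij)

lemma len_left:
  assumes w: "w permutes {1..n}" and i: "i \<in> {1..<n}"
  shows "(inv w i < inv w (Suc i) \<longrightarrow> len n (sgen i \<circ> w) = Suc (len n w)) \<and>
         (inv w (Suc i) < inv w i \<longrightarrow> len n w = Suc (len n (sgen i \<circ> w)))"
proof -
  have p: "sgen i \<circ> w permutes {1..n}" using permutes_compose[OF w sgen_permutes[OF i]] .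
  have "len n (sgen i \<circ> w) = len n (inv w \<circ> sgen i)"
    using len_inv[OF p] inv_comp_perm[OF w sgen_permutes[OF i]] by simp
  moreover have "len n w = len n (inv w)" using len_inv[OF w] by simp
  ultimately show ?thesis using len_right[OF permutes_inv[OF w] i] by simp
qed

lemma len_id[simp]: "len n id = 0"
proof -
  have "invs n id = {}" by (auto simp: invs_def)
  then show ?thesis by (simp add: len_def)
qed

lemma len_id'[simp]: "len n (\<lambda>a. a) = 0"
  using len_id by (simp add: id_def)

lemma word_perm_Cons[simp]: "word_perm (i # b) = sgen i \<circ> word_perm b"
  by (simp add: word_perm_def)
lemma word_perm_Nil[simp]: "word_perm [] = id"
  by (simp add: word_perm_def)
lemma word_perm_snoc: "word_perm (b @ [i]) = word_perm b \<circ> sgen i"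
  by (induction b) (auto simp: comp_assoc)

lemma word_perm_permutes: "set b \<subseteq> {1..<n} \<Longrightarrow> word_perm b permutes {1..n}"
proof (induction b)
  case Nil show ?case by (simp only: word_perm_Nil) (rule Permutations.permutes_id)
next
  case (Cons i b)
  then have "word_perm b permutes {1..n}" "i \<in> {1..<n}" by auto
  then show ?case by (simp only: word_perm_Cons) (rule permutes_compose[OF _ sgen_permutes])
qed

lemma len_Suc_le:
  assumes w: "w permutes {1..n}" and i: "i \<in> {1..<n}"
  shows "len n (sgen i \<circ> w) \<le> Suc (len n w)"
proof -
  have "inv w i \<noteq> inv w (Suc i)" using permutes_inj[OF permutes_inv[OF w]] unfolding inj_def by (metis n_not_Suc_n)
  then show ?thesis using len_left[OF w i] by (cases "inv w i < inv w (Suc i)") auto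
qed

lemma len_word: "set b \<subseteq> {1..<n} \<Longrightarrow> len n (word_perm b) \<le> length b"
proof (induction b)
  case Nil
  then show ?case by simp
next
  case (Cons i b)
  then have b: "set b \<subseteq> {1..<n}" and i: "i \<in> {1..<n}" by auto
  have "len n (word_perm (i # b)) = len n (sgen i \<circ> word_perm b)" by simp
  also have "\<dots> \<le> Suc (len n (word_perm b))" by (rule len_Suc_le[OF word_perm_permutes[OF b] i])
  also have "\<dots> \<le> length (i # b)" using Cons.IH[OF b] by simp
  finally show ?case .
qed

lemma incr_all:
  fixes y :: "nat \<Rightarrow> nat"
  assumes "\<forall>i\<in>{1..<n}. y i < y (Suc i)" "a \<in> {1..n}" "b \<in> {1..n}" "a < b"
  shows "y a < y b"
  using assms(3,4)
proof (induction b)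
  case 0 then show ?case by simp
next
  case (Suc b)
  then have b1: "b \<in> {1..<n}" using assms(2) by auto
  show ?case
  proof (cases "a = b")
    case True then show ?thesis using assms(1) b1 by auto
  next
    case False
    then have "y a < y b" using Suc assms(2) by auto
    moreover have "y b < y (Suc b)" using assms(1) b1 by blast
    ultimately show ?thesis by simp
  qed
qed

lemma len0_id:
  assumes w: "w permutes {1..n}" and l: "len n w = 0"
  shows "w = id"
proof -
  have e: "invs n w = {}" using l unfolding len_def by simp
  have inj: "w a \<noteq> w b" if "a \<noteq> b" for a b using permutes_inj[OF w] that unfolding inj_def by blast
  have lt: "w a < w b" if "a \<in> {1..n}" "b \<in> {1..n}" "a < b" for a b
  proof -
    have "\<not> w b < w a" using e that unfolding invs_def by blast
    then show ?thesis using inj[of a b] that by auto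
  qed
  have ge: "i \<le> w i" if "i \<in> {1..n}" for i
    using that
  proof (induction i)
    case 0 then show ?case by simp
  next
    case (Suc i)
    show ?case
    proof (cases "i = 0")
      case True
      then show ?thesis using permutes_in_image[OF w, of "Suc i"] Suc.prems by auto
    next
      case False
      then have "i \<le> w i" using Suc by auto
      moreover have "w i < w (Suc i)" using lt[of i "Suc i"] Suc.prems False by auto
      ultimately show ?thesis by simp
    qed
  qed
  show ?thesis using permutes_natset_ge[OF w] ge by blast
qed

lemma desc_exists:
  assumes w: "w permutes {1..n}" and l: "len n w > 0"
  shows "\<exists>i\<in>{1..<n}. inv w (Suc i) < inv w i"
proof (rule ccontr)
  assume "\<not> ?thesis"
  moreover have "inv w i \<noteq> inv w (Suc i)" for i using permutes_inj[OF permutes_inv[OF w]] unfolding inj_def by (metis n_not_Suc_n)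
  ultimately have "\<forall>i\<in>{1..<n}. inv w i < inv w (Suc i)" by (meson linorder_neqE_nat)
  then have "invs n (inv w) = {}" using incr_all[of n "inv w"] unfolding invs_def by fastforce
  then have "len n w = 0" using len_inv[OF w] unfolding len_def by simp
  then show False using l by simp
qed

lemma exists_word:
  "w permutes {1..n} \<Longrightarrow> \<exists>b. set b \<subseteq> {1..<n} \<and> word_perm b = w \<and> length b = len n w"
proof (induction "len n w" arbitrary: w)
  case 0
  then show ?case using len0_id[of w n] by (intro exI[of _ "[]"]) auto
next
  case (Suc k)
  obtain i where i: "i \<in> {1..<n}" "inv w (Suc i) < inv w i" using desc_exists[OF Suc.prems] Suc.hyps(2) by auto
  have p: "sgen i \<circ> w permutes {1..n}" using permutes_compose[OF Suc.prems sgen_permutes[OF i(1)]] .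
  have "len n w = Suc (len n (sgen i \<circ> w))" using len_left[OF Suc.prems i(1)] i(2) by simp
  then obtain d where d: "set d \<subseteq> {1..<n}" "word_perm d = sgen i \<circ> w" "length d = len n (sgen i \<circ> w)"
    using Suc.hyps(1)[of "sgen i \<circ> w"] p Suc.hyps(2) by auto
  show ?case
    by (rule exI[of _ "i # d"]) (use d i \<open>len n w = _\<close> in \<open>auto simp: comp_assoc[symmetric]\<close>)
qed

lemma reduced_word_iff:
  assumes w: "w permutes {1..n}"
  shows "reduced_word n w ws \<longleftrightarrow> set ws \<subseteq> {1..<n} \<and> word_perm ws = w \<and> length ws = len n w"
proof
  assume r: "reduced_word n w ws"
  obtain b where b: "set b \<subseteq> {1..<n}" "word_perm b = w" "length b = len n w" using exists_word[OF w] by blast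
  have "length ws \<le> length b" using r b unfolding reduced_word_def by blast
  moreover have "len n w \<le> length ws" using len_word[of ws n] r unfolding reduced_word_def by auto
  ultimately show "set ws \<subseteq> {1..<n} \<and> word_perm ws = w \<and> length ws = len n w" using r b unfolding reduced_word_def by auto
next
  assume "set ws \<subseteq> {1..<n} \<and> word_perm ws = w \<and> length ws = len n w"
  then show "reduced_word n w ws" unfolding reduced_word_def using len_word by fastforce
qed

lemma some_reduced:
  assumes w: "w permutes {1..n}"
  defines "ws \<equiv> SOME ws. reduced_word n w ws"
  shows "set ws \<subseteq> {1..<n} \<and> word_perm ws = w \<and> length ws = len n w"
proof -
  have "\<exists>ws. reduced_word n w ws" using exists_word[OF w] reduced_word_iff[OF w] by blast
  then have "reduced_word n w ws" unfolding ws_def by (rule someI_ex)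
  then show ?thesis using reduced_word_iff[OF w] by blast
qed

lemma inv_sgen_comp:
  assumes y: "y permutes {1..n}" and i: "i \<in> {1..<n}"
  shows "inv (sgen i \<circ> y) = inv y \<circ> sgen i"
  using inv_comp_perm[OF y sgen_permutes[OF i]] by simp

lemma sgen_comm: "Suc i < j \<or> Suc j < i \<Longrightarrow> sgen i \<circ> sgen j = sgen j \<circ> sgen i"
  by (auto simp: fun_eq_iff sgen_def)

lemma sgen_braid: "sgen i \<circ> sgen (Suc i) \<circ> sgen i = sgen (Suc i) \<circ> sgen i \<circ> sgen (Suc i)"
  by (auto simp: fun_eq_iff sgen_def)

lemma sgen_neq: "k \<noteq> i \<Longrightarrow> k \<noteq> Suc i \<Longrightarrow> sgen i k = k"
  by (auto simp: sgen_def)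

lemma inv_ne:
  assumes x: "x permutes {1..n}"
  shows "inv x i \<noteq> inv x (Suc i)"
  using permutes_inj[OF permutes_inv[OF x]] unfolding inj_def by (metis n_not_Suc_n)

lemma desc_far:
  assumes x: "x permutes {1..n}" and i: "i \<in> {1..<n}" and j: "j \<in> {1..<n}"
    and far: "Suc i < j \<or> Suc j < i"
    and di: "inv x (Suc i) < inv x i" and dj: "inv x (Suc j) < inv x j"
  shows "len n x = Suc (Suc (len n (sgen i \<circ> sgen j \<circ> x)))"
proof -
  have l1: "len n x = Suc (len n (sgen j \<circ> x))" using len_left[OF x j] dj by simp
  have y: "sgen j \<circ> x permutes {1..n}" by (rule permutes_compose[OF x sgen_permutes[OF j]])
  have "inv (sgen j \<circ> x) = inv x \<circ> sgen j" by (rule inv_sgen_comp[OF x j])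
  then have "inv (sgen j \<circ> x) (Suc i) < inv (sgen j \<circ> x) i"
  proof -
    have "sgen j (Suc i) = Suc i" "sgen j i = i" using far by (auto simp: sgen_def)
    then show ?thesis using di \<open>inv (sgen j \<circ> x) = _\<close> by simp
  qed
  then have "len n (sgen j \<circ> x) = Suc (len n (sgen i \<circ> (sgen j \<circ> x)))" using len_left[OF y i] by simp
  then show ?thesis using l1 by (simp add: comp_assoc)
qed

lemma desc_adj:
  assumes x: "x permutes {1..n}" and i: "i \<in> {1..<n}" and j: "Suc i \<in> {1..<n}"
    and di: "inv x (Suc i) < inv x i" and dj: "inv x (Suc (Suc i)) < inv x (Suc i)"
  shows "len n x = Suc (Suc (Suc (len n (sgen i \<circ> sgen (Suc i) \<circ> sgen i \<circ> x))))"
proof -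
  have l1: "len n x = Suc (len n (sgen i \<circ> x))" using len_left[OF x i] di by simp
  have y1: "sgen i \<circ> x permutes {1..n}" by (rule permutes_compose[OF x sgen_permutes[OF i]])
  have iy1: "inv (sgen i \<circ> x) = inv x \<circ> sgen i" by (rule inv_sgen_comp[OF x i])
  have "inv (sgen i \<circ> x) (Suc (Suc i)) < inv (sgen i \<circ> x) (Suc i)"
    unfolding iy1 using di dj by (simp add: sgen_def)
  then have l2: "len n (sgen i \<circ> x) = Suc (len n (sgen (Suc i) \<circ> (sgen i \<circ> x)))" using len_left[OF y1 j] by simp
  have y2: "sgen (Suc i) \<circ> (sgen i \<circ> x) permutes {1..n}" by (rule permutes_compose[OF y1 sgen_permutes[OF j]])
  have iy2: "inv (sgen (Suc i) \<circ> (sgen i \<circ> x)) = inv x \<circ> sgen i \<circ> sgen (Suc i)"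
    using inv_sgen_comp[OF y1 j] iy1 by simp
  have "inv (sgen (Suc i) \<circ> (sgen i \<circ> x)) (Suc i) < inv (sgen (Suc i) \<circ> (sgen i \<circ> x)) i"
    unfolding iy2 using dj by (simp add: sgen_def)
  then have l3: "len n (sgen (Suc i) \<circ> (sgen i \<circ> x)) = Suc (len n (sgen i \<circ> (sgen (Suc i) \<circ> (sgen i \<circ> x))))"
    using len_left[OF y2 i] by simp
  show ?thesis using l1 l2 l3 by (simp add: comp_assoc)
qed

definition redw :: "nat \<Rightarrow> nat list \<Rightarrow> bool" where
  "redw n b \<longleftrightarrow> set b \<subseteq> {1..<n} \<and> length b = len n (word_perm b)"

lemma redw_Cons:
  assumes "redw n (i # b)"
  shows "redw n b" "len n (word_perm (i#b)) = Suc (len n (word_perm b))"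
    "inv (word_perm (i#b)) (Suc i) < inv (word_perm (i#b)) i"
proof -
  have b: "set b \<subseteq> {1..<n}" and i: "i \<in> {1..<n}" using assms by (auto simp: redw_def)
  have y: "word_perm b permutes {1..n}" by (rule word_perm_permutes[OF b])
  have x: "word_perm (i#b) permutes {1..n}" by (rule word_perm_permutes) (use b i in auto)
  have "len n (word_perm (i#b)) \<le> Suc (len n (word_perm b))"
    using len_Suc_le[OF y i] by simp
  moreover have "len n (word_perm b) \<le> length b" by (rule len_word[OF b])
  ultimately show "redw n b" "len n (word_perm (i#b)) = Suc (len n (word_perm b))"
    using assms b unfolding redw_def by auto
  then have lt: "len n (sgen i \<circ> word_perm (i#b)) < len n (word_perm (i#b))"
    by (simp add: comp_assoc[symmetric])
  show "inv (word_perm (i#b)) (Suc i) < inv (word_perm (i#b)) i"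
  proof (rule ccontr)
    assume "\<not> ?thesis"
    then have "inv (word_perm (i#b)) i < inv (word_perm (i#b)) (Suc i)" using inv_ne[OF x, of i] by linarith
    then show False using len_left[OF x i] lt by simp
  qed
qed

lemma redw_exists:
  assumes "w permutes {1..n}"
  obtains d where "redw n d" "word_perm d = w"
  using exists_word[OF assms] unfolding redw_def by blast

lemma redw_intro: "set b \<subseteq> {1..<n} \<Longrightarrow> length b = len n (word_perm b) \<Longrightarrow> redw n b"
  by (simp add: redw_def)

lemma matsumoto:
  fixes T :: "nat \<Rightarrow> 'h::monoid_mult"
  assumes comm: "\<forall>i\<in>{1..<n}. \<forall>j\<in>{1..<n}. (i + 1 < j \<or> j + 1 < i) \<longrightarrow> T i * T j = T j * T i"
    and braid: "\<forall>i. 1 \<le> i \<and> i + 1 < n \<longrightarrow> T i * T (i+1) * T i = T (i+1) * T i * T (i+1)"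
  shows "redw n b \<Longrightarrow> redw n c \<Longrightarrow> word_perm b = word_perm c \<Longrightarrow>
         prod_list (map T b) = prod_list (map T c)"
proof (induction "length b" arbitrary: b c rule: less_induct)
  case less
  let ?P = "\<lambda>w. prod_list (map T w)"
  have lc: "length c = length b" using less.prems unfolding redw_def by simp
  show ?case
  proof (cases b)
    case Nil then show ?thesis using lc by simp
  next
    case (Cons i b')
    then obtain j c' where c: "c = j # c'" using lc by (cases c) auto
    define x where "x = word_perm b"
    have x: "x permutes {1..n}" unfolding x_def by (rule word_perm_permutes) (use less.prems in \<open>auto simp: redw_def\<close>)
    have i: "i \<in> {1..<n}" and j: "j \<in> {1..<n}" using less.prems Cons c by (auto simp: redw_def)
    note rb = redw_Cons[OF less.prems(1)[unfolded Cons]]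
    note rc = redw_Cons[OF less.prems(2)[unfolded c]]
    have pb': "word_perm b' = sgen i \<circ> x" unfolding x_def Cons by (simp add: comp_assoc[symmetric])
    have pc': "word_perm c' = sgen j \<circ> x" unfolding x_def less.prems(3) c by (simp add: comp_assoc[symmetric])
    have di: "inv x (Suc i) < inv x i" using rb(3) Cons x_def by simp
    have dj: "inv x (Suc j) < inv x j" using rc(3) c less.prems(3) x_def by simp
    have lx: "len n x = Suc (length b')" using rb(1,2) Cons x_def unfolding redw_def by simp
    have IH: "?P u = ?P v" if "redw n u" "redw n v" "word_perm u = word_perm v" "length u = length b'" for u v
      using less.hyps[of u v] that Cons by simp
    have adj: "T k * ?P u = T (Suc k) * ?P v"
      if k: "k \<in> {1..<n}" "Suc k \<in> {1..<n}" and dk: "inv x (Suc k) < inv x k"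
        and dk': "inv x (Suc (Suc k)) < inv x (Suc k)"
        and u: "redw n u" "word_perm u = sgen k \<circ> x" "length u = length b'"
        and v: "redw n v" "word_perm v = sgen (Suc k) \<circ> x" "length v = length b'" for k u v
    proof -
      let ?z = "sgen k \<circ> sgen (Suc k) \<circ> sgen k \<circ> x"
      have z: "?z permutes {1..n}" using x k by (intro permutes_compose sgen_permutes) auto
      obtain d where d: "redw n d" "word_perm d = ?z" using redw_exists[OF z] by blast
      have lz: "len n x = Suc (Suc (Suc (len n ?z)))" by (rule desc_adj[OF x k dk dk'])
      have dl: "length d = len n ?z" using d unfolding redw_def by simp
      have ds: "set d \<subseteq> {1..<n}" using d unfolding redw_def by simp
      have w1: "word_perm (Suc k # k # d) = sgen k \<circ> x"
        using d(2) by (simp add: comp_assoc[symmetric])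
      have e2: "sgen k \<circ> sgen (Suc k) \<circ> (sgen k \<circ> sgen (Suc k) \<circ> sgen k) = sgen (Suc k)"
      proof -
        have "sgen k \<circ> sgen (Suc k) \<circ> (sgen k \<circ> sgen (Suc k) \<circ> sgen k)
              = sgen k \<circ> sgen (Suc k) \<circ> (sgen (Suc k) \<circ> sgen k \<circ> sgen (Suc k))"
          using sgen_braid[of k] by simp
        also have "\<dots> = sgen (Suc k)" by (simp add: comp_assoc) (simp add: comp_assoc[symmetric])
        finally show ?thesis .
      qed
      have w2: "word_perm (k # Suc k # d) = sgen (Suc k) \<circ> x"
        using d(2) e2 by (simp add: comp_assoc[symmetric])
      have r1: "redw n (Suc k # k # d)"
        by (rule redw_intro) (use ds k w1 lz dl u lx in \<open>auto simp: redw_def\<close>)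
      have r2: "redw n (k # Suc k # d)"
        by (rule redw_intro) (use ds k w2 lz dl v lx in \<open>auto simp: redw_def\<close>)
      have "?P u = ?P (Suc k # k # d)" by (rule IH[OF u(1) r1]) (use u w1 lz dl lx in \<open>auto simp: redw_def\<close>)
      moreover have "?P v = ?P (k # Suc k # d)" by (rule IH[OF v(1) r2]) (use v w2 lz dl lx in \<open>auto simp: redw_def\<close>)
      moreover have "T k * (T (Suc k) * (T k * ?P d)) = T (Suc k) * (T k * (T (Suc k) * ?P d))"
        using braid k by (simp add: mult.assoc[symmetric])
      ultimately show ?thesis by simp
    qed
    consider "i = j" | "Suc i < j \<or> Suc j < i" | "j = Suc i" | "i = Suc j" by linarith
    then show ?thesis
    proof cases
      case 1
      then have "?P b' = ?P c'" using IH[OF rb(1) rc(1)] pb' pc' by simp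
      then show ?thesis using Cons c 1 by simp
    next
      case 2
      let ?z = "sgen i \<circ> sgen j \<circ> x"
      have z: "?z permutes {1..n}" using x i j by (intro permutes_compose sgen_permutes) auto
      obtain d where d: "redw n d" "word_perm d = ?z" using redw_exists[OF z] by blast
      have lz: "len n x = Suc (Suc (len n ?z))" by (rule desc_far[OF x i j 2 di dj])
      have dl: "length d = len n ?z" using d unfolding redw_def by simp
      have ds: "set d \<subseteq> {1..<n}" using d unfolding redw_def by simp
      have cm: "sgen i \<circ> sgen j = sgen j \<circ> sgen i" by (rule sgen_comm[OF 2])
      have w1: "word_perm (j # d) = sgen i \<circ> x"
      proof -
        have "word_perm (j # d) = sgen j \<circ> (sgen i \<circ> sgen j) \<circ> x" using d(2) by (simp add: comp_assoc)
        also have "\<dots> = sgen j \<circ> (sgen j \<circ> sgen i) \<circ> x" using cm by simp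
        also have "\<dots> = sgen i \<circ> x" by (simp add: comp_assoc[symmetric])
        finally show ?thesis .
      qed
      have w2: "word_perm (i # d) = sgen j \<circ> x" using d(2) by (simp add: comp_assoc[symmetric])
      have r1: "redw n (j # d)"
        by (rule redw_intro) (use ds j w1 lz dl rb(1) pb' lx in \<open>auto simp: redw_def\<close>)
      have r2: "redw n (i # d)"
        by (rule redw_intro) (use ds i w2 lz dl lx rc(1) pc' lc Cons c in \<open>auto simp: redw_def\<close>)
      have "?P b' = ?P (j # d)" by (rule IH[OF rb(1) r1]) (use pb' w1 lz dl lx in auto)
      moreover have "?P c' = ?P (i # d)" by (rule IH[OF rc(1) r2]) (use pc' w2 lz dl lx rc(1) c lc Cons in \<open>auto simp: redw_def\<close>)
      moreover have "T i * T j = T j * T i" using comm i j 2 by auto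
      ultimately show ?thesis using Cons c by (simp add: mult.assoc[symmetric])
    next
      case 3
      have "T i * ?P b' = T (Suc i) * ?P c'"
        by (rule adj[OF i _ di _ rb(1) pb' refl rc(1)]) (use j 3 dj pc' lc Cons c in auto)
      then show ?thesis using Cons c 3 by simp
    next
      case 4
      have "T j * ?P c' = T (Suc j) * ?P b'"
        by (rule adj[OF j _ dj _ rc(1) pc' _ rb(1)]) (use i 4 di pb' lc Cons c in auto)
      then show ?thesis using Cons c 4 by simp
    qed
  qed
qed

lemma redw_snoc:
  assumes "redw n (a @ [i])"
  shows "redw n a" "word_perm a i < word_perm a (Suc i)"
proof -
  have a: "set a \<subseteq> {1..<n}" and i: "i \<in> {1..<n}" using assms by (auto simp: redw_def)
  define y where "y = word_perm a"
  have y: "y permutes {1..n}" unfolding y_def by (rule word_perm_permutes[OF a])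
  have l: "len n (y \<circ> sgen i) = Suc (length a)" using assms unfolding redw_def y_def by (simp add: word_perm_snoc)
  have le: "len n y \<le> length a" unfolding y_def by (rule len_word[OF a])
  have ne: "y i \<noteq> y (Suc i)" using permutes_inj[OF y] unfolding inj_def by (metis n_not_Suc_n)
  have asc: "y i < y (Suc i)"
  proof (rule ccontr)
    assume "\<not> ?thesis"
    then have "y (Suc i) < y i" using ne by linarith
    then have "len n y = Suc (len n (y \<circ> sgen i))" using len_right[OF y i] by simp
    then show False using l le by simp
  qed
  then show "word_perm a i < word_perm a (Suc i)" unfolding y_def .
  have "len n (y \<circ> sgen i) = Suc (len n y)" using len_right[OF y i] asc by simp
  then show "redw n a" using l a unfolding redw_def y_def by simp
qed



lemma w0_w0: "w0 n (w0 n i) = i" by (cases "i \<in> {1..n}") (auto simp: w0_def)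

lemma w0_permutes: "w0 n permutes {1..n}"
  unfolding permutes_def
proof (intro conjI allI impI)
  show "w0 n x = x" if "x \<notin> {1..n}" for x using that unfolding w0_def by auto
  show "\<exists>!x. w0 n x = y" for y by (metis w0_w0)
qed


lemma inv_w0: "inv (w0 n) = w0 n"
  by (metis inv_unique_comp w0_w0 comp_apply fun_eq_iff id_apply)

context
  fixes n :: nat
    and sc :: "Ah \<Rightarrow> 'h::ring_1" and T x :: "nat \<Rightarrow> 'h"
    and \<phi> :: "Ah \<Rightarrow> 'f::field" and t :: "nat \<Rightarrow> 'f"
    and scale :: "'f \<Rightarrow> 'v::ab_group_add \<Rightarrow> 'v" and act :: "'h \<Rightarrow> 'v \<Rightarrow> 'v"
    and Y :: "(nat \<Rightarrow> nat) \<Rightarrow> 'v" and ev :: "'v \<Rightarrow> 'f"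
  assumes AH: "affine_hecke n sc T x"
    and SR: "schubert_rep n sc T x \<phi> t scale act Y ev"
begin

lemma comm: "\<forall>i\<in>{1..<n}. \<forall>j\<in>{1..<n}. (i + 1 < j \<or> j + 1 < i) \<longrightarrow> T i * T j = T j * T i"
  using AH unfolding affine_hecke_def by blast
lemma braid: "\<forall>i. 1 \<le> i \<and> i + 1 < n \<longrightarrow> T i * T (i+1) * T i = T (i+1) * T i * T (i+1)"
  using AH unfolding affine_hecke_def by blast
lemma quad: "i \<in> {1..<n} \<Longrightarrow> (T i + sc pA) * (T i - sc qA) = 0"
  using AH unfolding affine_hecke_def by blast
lemma central: "sc a * h = h * sc a"
  using AH unfolding affine_hecke_def by blast

lemma act_add1: "act (h1 + h2) v = act h1 v + act h2 v" using SR unfolding schubert_rep_def by blast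
lemma act_add2: "act h (v1 + v2) = act h v1 + act h v2" using SR unfolding schubert_rep_def by blast
lemma act_scale: "act h (scale c v) = scale c (act h v)" using SR unfolding schubert_rep_def by blast
lemma act_mult: "act (h1 * h2) v = act h1 (act h2 v)" using SR unfolding schubert_rep_def by blast
lemma act_one: "act 1 v = v" using SR unfolding schubert_rep_def by blast
lemma act_sc: "act (sc a) v = scale (\<phi> a) v" using SR unfolding schubert_rep_def by blast
lemma Y_def': "w \<in> Sn n \<Longrightarrow> Y w = act (Tw n T (inv w \<circ> w0 n)) (Y (w0 n))" using SR unfolding schubert_rep_def by blast
lemma Y_inj: "inj_on Y (Sn n)" using SR unfolding schubert_rep_def by blast
lemma Y_span: "module.span scale (Y ` Sn n) = UNIV" using SR unfolding schubert_rep_def by blast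
lemma VS: "vector_space scale" using SR unfolding schubert_rep_def by blast
lemma LIN: "Vector_Spaces.linear scale (*) ev" using SR unfolding schubert_rep_def by blast
lemma ev_Y: "w \<in> Sn n \<Longrightarrow> ev (Y w) \<noteq> 0 \<longleftrightarrow> w = id" using SR unfolding schubert_rep_def by blast
lemma ev_x: "i \<in> {1..n} \<Longrightarrow> w \<in> Sn n \<Longrightarrow> ev (act (x i) (Y w)) = t i * ev (Y w)" using SR unfolding schubert_rep_def by blast

interpretation V: vector_space scale by (rule VS)
interpretation L: Vector_Spaces.linear scale "(*)" ev by (rule LIN)

lemma act_zero1: "act 0 v = 0"
  using act_add1[of 0 0 v] by simp
lemma act_zero2: "act h 0 = 0"
  using act_add2[of h 0 0] by simp
lemma act_sum1: "act (\<Sum>k\<in>A. g k) v = (\<Sum>k\<in>A. act (g k) v)"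
  using sum_comp_morphism[of "\<lambda>h. act h v" g A] act_zero1 act_add1 by (simp add: o_def)
lemma act_sum2: "act h (\<Sum>k\<in>A. g k) = (\<Sum>k\<in>A. act h (g k))"
  using sum_comp_morphism[of "act h" g A] act_zero2 act_add2 by (simp add: o_def)
lemma act_diff2: "act h (a - b) = act h a - act h b"
proof -
  have "act h (a - b) + act h b = act h a" using act_add2[of h "a - b" b] by simp
  then show ?thesis by (simp add: eq_diff_eq)
qed

lemma finite_Sn: "finite (Sn n)"
  unfolding Sn_def by (rule finite_permutations) simp

lemma span_repr: "\<exists>d. v = (\<Sum>w\<in>Sn n. scale (d w) (Y w))"
proof -
  have fin: "finite (Y ` Sn n)" using finite_Sn by simp
  have "v \<in> V.span (Y ` Sn n)" using Y_span by simp
  then obtain u where u: "v = (\<Sum>y\<in>Y ` Sn n. scale (u y) y)" using V.span_finite[OF fin] by auto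
  also have "\<dots> = (\<Sum>w\<in>Sn n. scale (u (Y w)) (Y w))" by (rule sum.reindex[OF Y_inj, unfolded o_def])
  finally show ?thesis by (intro exI[of _ "\<lambda>w. u (Y w)"])
qed

lemma Sn_permutes: "w \<in> Sn n \<longleftrightarrow> w permutes {1..n}" by (simp add: Sn_def)

lemma Tw_word:
  assumes w: "w permutes {1..n}" and b: "redw n b" "word_perm b = w"
  shows "Tw n T w = prod_list (map T b)"
proof -
  define c where "c = (SOME ws. reduced_word n w ws)"
  have "set c \<subseteq> {1..<n} \<and> word_perm c = w \<and> length c = len n w" unfolding c_def by (rule some_reduced[OF w])
  then have c: "redw n c" "word_perm c = w" unfolding redw_def by auto
  have "prod_list (map T c) = prod_list (map T b)" by (rule matsumoto[OF comm braid c(1) b(1)]) (use c b in simp)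
  then show ?thesis unfolding Tw_def c_def[symmetric] .
qed

lemma T_Y_asc:
  assumes wS: "w \<in> Sn n" and i: "i \<in> {1..<n}" and d: "w (Suc i) < w i"
  shows "act (T i) (Y w) = Y (w \<circ> sgen i)"
proof -
  have w: "w permutes {1..n}" using wS by (simp add: Sn_def)
  define xw where "xw = inv w \<circ> w0 n"
  have xw: "xw permutes {1..n}" unfolding xw_def by (rule permutes_compose[OF w0_permutes permutes_inv[OF w]])
  obtain c where c: "redw n c" "word_perm c = xw" using redw_exists[OF xw] by blast
  have Yw: "Y w = act (prod_list (map T c)) (Y (w0 n))" using Y_def'[OF wS] Tw_word[OF xw c] xw_def by simp
  have ixw: "inv xw = w0 n \<circ> w" unfolding xw_def
    using inv_comp_perm[OF w0_permutes permutes_inv[OF w]] permutes_inv_inv[OF w] inv_w0 by simp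
  have r: "w i \<in> {1..n}" "w (Suc i) \<in> {1..n}" using i permutes_in_image[OF w] by auto
  have "inv xw i < inv xw (Suc i)" unfolding ixw using r d by (auto simp: w0_def)
  then have lx: "len n (sgen i \<circ> xw) = Suc (len n xw)" using len_left[OF xw i] by simp
  have ric: "redw n (i # c)" using c i lx unfolding redw_def by simp
  have ws: "w \<circ> sgen i \<in> Sn n" unfolding Sn_def using permutes_compose[OF sgen_permutes[OF i] w] by simp
  have "inv (w \<circ> sgen i) \<circ> w0 n = sgen i \<circ> xw"
    unfolding xw_def using inv_comp_perm[OF sgen_permutes[OF i] w] by (simp add: comp_assoc)
  then have "Y (w \<circ> sgen i) = act (Tw n T (sgen i \<circ> xw)) (Y (w0 n))" using Y_def'[OF ws] by simp
  also have "Tw n T (sgen i \<circ> xw) = prod_list (map T (i # c))"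
    by (rule Tw_word[OF _ ric]) (use permutes_compose[OF xw sgen_permutes[OF i]] c in auto)
  finally have "Y (w \<circ> sgen i) = act (prod_list (map T (i # c))) (Y (w0 n))" .
  then show ?thesis by (simp only: Yw list.map prod_list.Cons act_mult)
qed

definition Tb where "Tb i = T i + sc pA - sc qA"

lemma act_diff1: "act (h1 - h2) v = act h1 v - act h2 v"
proof -
  have "act (h1 - h2) v + act h2 v = act h1 v" using act_add1[of "h1 - h2" h2 v] by simp
  then show ?thesis by (simp add: eq_diff_eq)
qed

lemma Tb_T: "i \<in> {1..<n} \<Longrightarrow> Tb i * T i = sc pA * sc qA"
proof -
  assume i: "i \<in> {1..<n}"
  have "(T i + sc pA) * (T i - sc qA) = 0" by (rule quad[OF i])
  moreover have "T i * sc qA = sc qA * T i" using central by simp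
  ultimately show ?thesis unfolding Tb_def by (simp add: algebra_simps)
qed

lemma Tb_Y_desc:
  assumes wS: "w \<in> Sn n" and i: "i \<in> {1..<n}" and d: "w (Suc i) < w i"
  shows "act (Tb i) (Y w) = Y (w \<circ> sgen i) + scale (\<phi> pA - \<phi> qA) (Y w)"
  unfolding Tb_def act_diff1 act_add1 act_sc T_Y_asc[OF assms] by (simp add: V.scale_left_diff_distrib)

lemma Tb_Y_asc:
  assumes wS: "w \<in> Sn n" and i: "i \<in> {1..<n}" and d: "w i < w (Suc i)"
  shows "act (Tb i) (Y w) = scale (\<phi> pA * \<phi> qA) (Y (w \<circ> sgen i))"
proof -
  have w: "w permutes {1..n}" using wS by (simp add: Sn_def)
  have ws: "w \<circ> sgen i \<in> Sn n" unfolding Sn_def using permutes_compose[OF sgen_permutes[OF i] w] by simp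
  have "act (T i) (Y (w \<circ> sgen i)) = Y (w \<circ> sgen i \<circ> sgen i)"
    by (rule T_Y_asc[OF ws i]) (use d in \<open>simp add: sgen_def\<close>)
  then have Yw: "Y w = act (T i) (Y (w \<circ> sgen i))" by (simp add: comp_assoc)
  show ?thesis unfolding Yw act_mult[symmetric] Tb_T[OF i] act_mult act_sc by (simp add: V.scale_scale)
qed

lemma c0_nz: "ev (Y id) \<noteq> 0"
  using ev_Y[of id] by (simp add: Sn_def)

lemma ev_Y_if: "v \<in> Sn n \<Longrightarrow> ev (Y v) = (if v = id then ev (Y id) else 0)"
  using ev_Y[of v] by auto

lemma ev_Tb_word:
  "redw n a \<Longrightarrow> v \<in> Sn n \<Longrightarrow> ev (act (prod_list (map Tb a)) (Y v)) = (if v = word_perm a then ev (Y id) else 0)"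
proof (induction a arbitrary: v rule: rev_induct)
  case Nil
  then show ?case using ev_Y_if[of v] by (simp only: list.map prod_list.Nil act_one word_perm_Nil)
next
  case (snoc i a)
  note ra = redw_snoc[OF snoc.prems(1)]
  have i: "i \<in> {1..<n}" using snoc.prems(1) by (simp add: redw_def)
  define y where "y = word_perm a"
  have asc: "y i < y (Suc i)" using ra(2) y_def by simp
  have v: "v permutes {1..n}" using snoc.prems(2) by (simp add: Sn_def)
  have vs: "v \<circ> sgen i \<in> Sn n" unfolding Sn_def using permutes_compose[OF sgen_permutes[OF i] v] by simp
  have ne: "v i \<noteq> v (Suc i)" using permutes_inj[OF v] unfolding inj_def by (metis n_not_Suc_n)
  have eqv: "(v \<circ> sgen i = y) \<longleftrightarrow> (v = y \<circ> sgen i)"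
    by (metis comp_assoc comp_id sgen_o_sgen)
  have wp: "word_perm (a @ [i]) = y \<circ> sgen i" unfolding y_def by (simp add: word_perm_snoc)
  let ?A = "prod_list (map Tb a)"
  have split: "act (prod_list (map Tb (a @ [i]))) (Y v) = act ?A (act (Tb i) (Y v))" by (simp add: act_mult)
  show ?case
  proof (cases "v (Suc i) < v i")
    case True
    have "ev (act ?A (act (Tb i) (Y v))) = ev (act ?A (Y (v \<circ> sgen i))) + (\<phi> pA - \<phi> qA) * ev (act ?A (Y v))"
      unfolding Tb_Y_desc[OF snoc.prems(2) i True] act_add2 act_scale L.add L.scale ..
    also have "\<dots> = (if v \<circ> sgen i = y then ev (Y id) else 0) + (\<phi> pA - \<phi> qA) * (if v = y then ev (Y id) else 0)"
      unfolding snoc.IH[OF ra(1) vs] snoc.IH[OF ra(1) snoc.prems(2)] y_def by (rule refl)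
    also have "\<dots> = (if v = word_perm (a @ [i]) then ev (Y id) else 0)"
    proof -
      have "v \<noteq> y" using True asc by auto
      then show ?thesis using eqv wp by simp
    qed
    finally show ?thesis using split by simp
  next
    case False
    then have lt: "v i < v (Suc i)" using ne by linarith
    have "ev (act ?A (act (Tb i) (Y v))) = (\<phi> pA * \<phi> qA) * ev (act ?A (Y (v \<circ> sgen i)))"
      unfolding Tb_Y_asc[OF snoc.prems(2) i lt] act_scale L.scale ..
    also have "\<dots> = (\<phi> pA * \<phi> qA) * (if v \<circ> sgen i = y then ev (Y id) else 0)"
      unfolding snoc.IH[OF ra(1) vs] y_def by (rule refl)
    also have "\<dots> = 0"
    proof -
      have "v \<circ> sgen i \<noteq> y"
      proof
        assume "v \<circ> sgen i = y"
        then have "y i = v (Suc i)" "y (Suc i) = v i" by (auto simp: sgen_def)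
        then show False using lt asc by simp
      qed
      then show ?thesis by simp
    qed
    also have "\<dots> = (if v = word_perm (a @ [i]) then ev (Y id) else 0)"
    proof -
      have "v \<noteq> y \<circ> sgen i"
      proof
        assume "v = y \<circ> sgen i"
        then have "v i = y (Suc i)" "v (Suc i) = y i" by (auto simp: sgen_def)
        then show False using lt asc by simp
      qed
      then show ?thesis using wp by simp
    qed
    finally show ?thesis using split by simp
  qed
qed

lemma ev_Tbar:
  assumes w: "w \<in> Sn n" and v: "v \<in> Sn n"
  shows "ev (act (Tbar n sc T w) (Y v)) = (if v = w then ev (Y id) else 0)"
proof -
  have wp: "w permutes {1..n}" using w by (simp add: Sn_def)
  define c where "c = (SOME ws. reduced_word n w ws)"
  have "set c \<subseteq> {1..<n} \<and> word_perm c = w \<and> length c = len n w" unfolding c_def by (rule some_reduced[OF wp])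
  then have c: "redw n c" "word_perm c = w" unfolding redw_def by auto
  have "Tbar n sc T w = prod_list (map Tb c)" unfolding Tbar_def Tw_def c_def Tb_def by simp
  then show ?thesis using ev_Tb_word[OF c(1) v] c(2) by simp
qed

lemma ev_xi:
  assumes i: "i \<in> {1..n}"
  shows "ev (act (x i) v) = t i * ev v"
proof -
  obtain d where dv: "v = (\<Sum>w\<in>Sn n. scale (d w) (Y w))" using span_repr by blast
  have "ev (act (x i) v) = ev (\<Sum>w\<in>Sn n. scale (d w) (act (x i) (Y w)))"
    by (simp only: dv act_sum2 act_scale)
  also have "\<dots> = (\<Sum>w\<in>Sn n. d w * ev (act (x i) (Y w)))"
    by (simp only: L.sum L.scale)
  also have "\<dots> = (\<Sum>w\<in>Sn n. d w * (t i * ev (Y w)))"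
    by (rule sum.cong[OF refl]) (simp only: ev_x[OF i] Sn_def)
  also have "\<dots> = t i * (\<Sum>w\<in>Sn n. d w * ev (Y w))"
    unfolding sum_distrib_left by (rule sum.cong[OF refl]) (simp only: mult.left_commute)
  also have "(\<Sum>w\<in>Sn n. d w * ev (Y w)) = ev v"
    by (simp only: dv L.sum L.scale)
  finally show ?thesis .
qed

lemma ev_pow:
  assumes "\<And>v. ev (act h v) = g * ev v"
  shows "ev (act (h ^ k) v) = g ^ k * ev v"
proof (induction k arbitrary: v)
  case 0 then show ?case by (simp add: act_one)
next
  case (Suc k)
  have "ev (act (h ^ Suc k) v) = ev (act h (act (h ^ k) v))" by (simp only: power_Suc act_mult)
  also have "\<dots> = g * ev (act (h ^ k) v)" by (rule assms)
  also have "\<dots> = g * (g ^ k * ev v)" by (simp only: Suc.IH)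
  finally show ?case by (simp only: power_Suc mult.assoc)
qed

lemma ev_prodlist:
  "set l \<subseteq> {1..n} \<Longrightarrow> ev (act (prod_list (map (\<lambda>i. x i ^ e i) l)) v) = prod_list (map (\<lambda>i. t i ^ e i) l) * ev v"
proof (induction l arbitrary: v)
  case Nil show ?case by (simp only: list.map prod_list.Nil act_one mult_1_left)
next
  case (Cons a l)
  then have a: "a \<in> {1..n}" and l: "set l \<subseteq> {1..n}" by auto
  have "ev (act (prod_list (map (\<lambda>i. x i ^ e i) (a # l))) v)
      = ev (act (x a ^ e a) (act (prod_list (map (\<lambda>i. x i ^ e i) l)) v))" by (simp only: list.map prod_list.Cons act_mult)
  also have "\<dots> = t a ^ e a * ev (act (prod_list (map (\<lambda>i. x i ^ e i) l)) v)"
    by (rule ev_pow) (rule ev_xi[OF a])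
  also have "\<dots> = t a ^ e a * (prod_list (map (\<lambda>i. t i ^ e i) l) * ev v)" by (simp only: Cons.IH[OF l])
  finally show ?case by (simp only: list.map prod_list.Cons mult.assoc)
qed

lemma ev_xmon:
  assumes "Poly_Mapping.keys \<alpha> \<subseteq> {1..n}"
  shows "ev (act (xmonH x \<alpha>) v) = xmon t \<alpha> * ev v"
proof -
  let ?l = "sorted_list_of_set (Poly_Mapping.keys \<alpha>)"
  have fin: "finite (Poly_Mapping.keys \<alpha>)" by (rule finite_keys)
  have sl: "set ?l = Poly_Mapping.keys \<alpha>" by (rule set_sorted_list_of_set[OF fin])
  have dl: "distinct ?l" by (rule distinct_sorted_list_of_set)
  have "xmon t \<alpha> = prod_list (map (\<lambda>i. t i ^ Poly_Mapping.lookup \<alpha> i) ?l)"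
    unfolding xmon_def prod.distinct_set_conv_list[OF dl, symmetric] sl ..
  moreover have "ev (act (xmonH x \<alpha>) v) = prod_list (map (\<lambda>i. t i ^ Poly_Mapping.lookup \<alpha> i) ?l) * ev v"
    unfolding xmonH_def by (rule ev_prodlist) (simp only: sl assms)
  ultimately show ?thesis by (simp only:)
qed

lemma ev_emb:
  assumes g: "is_xpoly n g"
  shows "ev (act (emb sc x g) v) = evalP \<phi> t g * ev v"
proof -
  have "ev (act (emb sc x g) v) = (\<Sum>\<alpha>\<in>Poly_Mapping.keys g. \<phi> (Poly_Mapping.lookup g \<alpha>) * ev (act (xmonH x \<alpha>) v))"
    by (simp only: emb_def act_sum1 act_mult act_sc L.sum L.scale)
  also have "\<dots> = (\<Sum>\<alpha>\<in>Poly_Mapping.keys g. \<phi> (Poly_Mapping.lookup g \<alpha>) * (xmon t \<alpha> * ev v))"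
  proof (rule sum.cong[OF refl])
    fix \<alpha> assume "\<alpha> \<in> Poly_Mapping.keys g"
    then have "Poly_Mapping.keys \<alpha> \<subseteq> {1..n}" using g unfolding is_xpoly_def by blast
    then show "\<phi> (Poly_Mapping.lookup g \<alpha>) * ev (act (xmonH x \<alpha>) v) = \<phi> (Poly_Mapping.lookup g \<alpha>) * (xmon t \<alpha> * ev v)"
      by (simp only: ev_xmon)
  qed
  also have "\<dots> = evalP \<phi> t g * ev v"
    unfolding evalP_def sum_distrib_right by (simp only: mult.assoc)
  finally show ?thesis .
qed

lemma main_lemma:
  assumes f: "is_xpoly n f"
    and Pp: "\<forall>u\<in>Sn n. \<forall>w\<in>Sn n. is_xpoly n (P u w)"
    and rel: "\<forall>w\<in>Sn n. Tbar n sc T w * emb sc x f = (\<Sum>u\<in>Sn n. emb sc x (P u w) * Tbar n sc T u)"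
    and u: "u \<in> Sn n"
  shows "act (emb sc x f) (Y u) = (\<Sum>w\<in>Sn n. scale (evalP \<phi> t (P u w)) (Y w))"
proof -
  let ?c = "ev (Y id)"
  let ?L = "act (emb sc x f) (Y u)"
  let ?R = "\<Sum>w\<in>Sn n. scale (evalP \<phi> t (P u w)) (Y w)"
  obtain d where dD: "?L - ?R = (\<Sum>w\<in>Sn n. scale (d w) (Y w))" using span_repr by blast
  have dz: "d w = 0" if w: "w \<in> Sn n" for w
  proof -
    let ?B = "Tbar n sc T w"
    have e1: "ev (act ?B (?L - ?R)) = d w * ?c"
    proof -
      have "ev (act ?B (?L - ?R)) = (\<Sum>z\<in>Sn n. d z * ev (act ?B (Y z)))"
        by (simp only: dD act_sum2 act_scale L.sum L.scale)
      also have "\<dots> = (\<Sum>z\<in>Sn n. if z = w then d z * ?c else 0)"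
        by (rule sum.cong[OF refl]) (simp add: ev_Tbar[OF w])
      also have "\<dots> = d w * ?c" using w finite_Sn by simp
      finally show ?thesis .
    qed
    have e2: "ev (act ?B ?L) = evalP \<phi> t (P u w) * ?c"
    proof -
      have "act ?B ?L = act (?B * emb sc x f) (Y u)" by (simp only: act_mult)
      also have "\<dots> = act (\<Sum>u'\<in>Sn n. emb sc x (P u' w) * Tbar n sc T u') (Y u)" using rel w by simp
      finally have "ev (act ?B ?L) = (\<Sum>u'\<in>Sn n. ev (act (emb sc x (P u' w)) (act (Tbar n sc T u') (Y u))))"
        by (simp only: act_sum1 act_mult L.sum)
      also have "\<dots> = (\<Sum>u'\<in>Sn n. evalP \<phi> t (P u' w) * ev (act (Tbar n sc T u') (Y u)))"
        by (rule sum.cong[OF refl]) (use Pp w in \<open>simp add: ev_emb\<close>)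
      also have "\<dots> = (\<Sum>u'\<in>Sn n. if u' = u then evalP \<phi> t (P u' w) * ?c else 0)"
        by (rule sum.cong[OF refl]) (use u in \<open>auto simp add: ev_Tbar\<close>)
      also have "\<dots> = evalP \<phi> t (P u w) * ?c" using u finite_Sn by simp
      finally show ?thesis .
    qed
    have e3: "ev (act ?B ?R) = evalP \<phi> t (P u w) * ?c"
    proof -
      have "ev (act ?B ?R) = (\<Sum>z\<in>Sn n. evalP \<phi> t (P u z) * ev (act ?B (Y z)))"
        by (simp only: act_sum2 act_scale L.sum L.scale)
      also have "\<dots> = (\<Sum>z\<in>Sn n. if z = w then evalP \<phi> t (P u z) * ?c else 0)"
        by (rule sum.cong[OF refl]) (simp add: ev_Tbar[OF w])
      also have "\<dots> = evalP \<phi> t (P u w) * ?c" using w finite_Sn by simp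
      finally show ?thesis .
    qed
    have "d w * ?c = 0" using e1 e2 e3 by (simp only: act_diff2 L.diff diff_self)
    then show ?thesis using c0_nz by simp
  qed
  have "?L - ?R = 0" unfolding dD using dz by simp
  then show ?thesis by simp
qed

end

theorem theorem3p6:
  fixes n :: nat
    and sc :: "Ah \<Rightarrow> 'h::ring_1" and T x :: "nat \<Rightarrow> 'h"
    and \<phi> :: "Ah \<Rightarrow> 'f::field" and t :: "nat \<Rightarrow> 'f"
    and scale :: "'f \<Rightarrow> 'v::ab_group_add \<Rightarrow> 'v" and act :: "'h \<Rightarrow> 'v \<Rightarrow> 'v"
    and Y :: "(nat \<Rightarrow> nat) \<Rightarrow> 'v" and ev :: "'v \<Rightarrow> 'f"
    and f :: Apoly and P :: "(nat \<Rightarrow> nat) \<Rightarrow> (nat \<Rightarrow> nat) \<Rightarrow> Apoly"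
  assumes "affine_hecke n sc T x"
    and "schubert_rep n sc T x \<phi> t scale act Y ev"
    and "is_xpoly n f"
    and "\<forall>u\<in>Sn n. \<forall>w\<in>Sn n. is_xpoly n (P u w)"
    and "\<forall>w\<in>Sn n. Tbar n sc T w * emb sc x f = (\<Sum>u\<in>Sn n. emb sc x (P u w) * Tbar n sc T u)"
  shows "\<forall>u\<in>Sn n. act (emb sc x f) (Y u) = (\<Sum>w\<in>Sn n. scale (evalP \<phi> t (P u w)) (Y w))"
  using main_lemma[OF assms(1,2,3,4,5)] by blast

end
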